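(* In the Yangian $Y_\hbar(A(m,n))$ described below, for all $i,j\in I$ and $s\in\mathbb Z_{\ge0}$ one has, as an identity of formal power series in $v$, $$\Big[\hbar\sum_{r\ge0}t_{i,r}\frac{v^r}{r!},\;x^\pm_{j,s}\Big]=\pm\frac{q^{a_{ij}v}-q^{-a_{ij}v}}{v}\sum_{k\ge0}\frac{v^k}{k!}\,x^\pm_{j,s+k},$$ where $q^{cv}:=e^{\hbar cv/2}$.
   Context: Let $m,n\ge0$, $I=\{1,\dots,m+n+1\}$, $(a_{ij})$ the symmetric matrix with $a_{ii}=2$ ($i\le m$), $a_{m+1,m+1}=0$, $a_{ii}=-2$ ($i\ge m+2$), $a_{i,i+1}=a_{i+1,i}=-1$ ($i\le m$), $a_{i,i+1}=a_{i+1,i}=1$ ($m+1\le i\le m+n$), other entries $0$; $\tilde a_{ij}=-1$ if $|i-j|=1$, $0$ otherwise. Brackets are supercommutators $[a,b]=ab-(-1)^{p(a)p(b)}ba$. $Y_\hbar(A(m,n))$ is the superalgebra over $\mathbb C[[\hbar]]$ generated by $h_{i,k},x^\pm_{i,k}$ ($i\in I$, $k\ge0$), with $x^\pm_{m+1,k}$ odd and others even, subject to: $[h_{i,k},h_{j,l}]=0$; $[h_{i,0},x^\pm_{j,s}]=\pm a_{ij}x^\pm_{j,s}$; $[x^+_{i,k},x^-_{j,l}]=\delta_{ij}h_{i,k+l}$; for $(i,j)\ne(m+1,m+1)$: $[h_{i,k+1},x^\pm_{j,l}]=[h_{i,k},x^\pm_{j,l+1}]\pm\frac{a_{ij}\hbar}{2}(h_{i,k}x^\pm_{j,l}+x^\pm_{j,l}h_{i,k})$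 and $[x^\pm_{i,k+1},x^\pm_{j,l}]=[x^\pm_{i,k},x^\pm_{j,l+1}]\pm\frac{a_{ij}\hbar}{2}(x^\pm_{i,k}x^\pm_{j,l}+x^\pm_{j,l}x^\pm_{i,k})$; $[h_{m+1,k+1},x^\pm_{m+1,l}]=0$; $[x^\pm_{m+1,k+1},x^\pm_{m+1,l}]=0$; for $i\ne j$, $r=1-\tilde a_{ij}$: $\sum_{\pi\in\mathfrak S_r}[x^\pm_{i,t_{\pi(1)}},[\dots,[x^\pm_{i,t_{\pi(r)}},x^\pm_{j,s}]\dots]]=0$; $[[x^\pm_{m,k},x^\pm_{m+1,0}],[x^\pm_{m+1,0},x^\pm_{m+2,t}]]=0$. The elements $t_{i,r}$ are defined by $\hbar\sum_{r\ge0}t_{i,r}u^{-r-1}=\log\big(1+\hbar\sum_{r\ge0}h_{i,r}u^{-r-1}\big)$. *)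

theory Defs
  imports "HOL-Computational_Algebra.Formal_Power_Series" "HOL-Combinatorics.Permutations"
begin

(* An associative unital algebra over C[[hbar]]: a ring 'a together with a unital ring
   homomorphism emb from C[[hbar]] (= complex fps, hbar = fps_X) into the centre of 'a. *)
definition alg_structure :: "(complex fps \<Rightarrow> 'a::ring_1) \<Rightarrow> bool" where
  "alg_structure emb \<longleftrightarrow> emb 1 = 1 \<and> (\<forall>a b. emb (a + b) = emb a + emb b)
     \<and> (\<forall>a b. emb (a * b) = emb a * emb b) \<and> (\<forall>c y. emb c * y = y * emb c)"

(* supercommutator of homogeneous elements with parities p q (True = odd) *)
definition sbr :: "bool \<Rightarrow> bool \<Rightarrow> 'a::ring_1 \<Rightarrow> 'a \<Rightarrow> 'a" where
  "sbr p q a b = (if p \<and> q then a * b + b * a else a * b - b * a)"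

(* the Cartan matrix a_ij of A(m,n) on I = {1..m+n+1} *)
definition cartan :: "nat \<Rightarrow> nat \<Rightarrow> nat \<Rightarrow> nat \<Rightarrow> int" where
  "cartan m n i j = (if i = j then (if i \<le> m then 2 else if i = m + 1 then 0 else -2)
     else if j = i + 1 \<or> i = j + 1 then (if min i j \<le> m then -1 else 1) else 0)"

definition cartan_tilde :: "nat \<Rightarrow> nat \<Rightarrow> int" where
  "cartan_tilde i j = (if j = i + 1 \<or> i = j + 1 then -1 else 0)"

definition ypar :: "nat \<Rightarrow> nat \<Rightarrow> bool" where
  "ypar m i = (i = m + 1)"

definition sg :: "bool \<Rightarrow> int" where
  "sg e = (if e then 1 else -1)"

(* nested bracket [x_{i,t1},[x_{i,t2},...,[x_{i,tr},x_{j,s}]...]] with correct parities *)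
fun serre_nest :: "nat \<Rightarrow> (bool \<Rightarrow> nat \<Rightarrow> nat \<Rightarrow> 'a::ring_1) \<Rightarrow> bool \<Rightarrow> nat \<Rightarrow> nat \<Rightarrow> nat
    \<Rightarrow> nat list \<Rightarrow> 'a" where
  "serre_nest m x e i j s [] = x e j s"
| "serre_nest m x e i j s (t # ts) =
     sbr (ypar m i) (ypar m j \<noteq> (ypar m i \<and> odd (length ts))) (x e i t) (serre_nest m x e i j s ts)"

(* defining relations of Y_hbar(A(m,n)); x True = x^+, x False = x^- *)
definition yangian_rels :: "nat \<Rightarrow> nat \<Rightarrow> (complex fps \<Rightarrow> 'a::ring_1) \<Rightarrow> (nat \<Rightarrow> nat \<Rightarrow> 'a)
    \<Rightarrow> (bool \<Rightarrow> nat \<Rightarrow> nat \<Rightarrow> 'a) \<Rightarrow> bool" where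
  "yangian_rels m n emb h x \<longleftrightarrow>
    (let I = {1..m+n+1}; p = ypar m; a = cartan m n; hb = emb fps_X;
         half = (\<lambda>c::int. emb (fps_const (of_int c / 2))) in
     (\<forall>i\<in>I. \<forall>j\<in>I. \<forall>k l. h i k * h j l = h j l * h i k) \<and>
     (\<forall>i\<in>I. \<forall>j\<in>I. \<forall>e s. sbr False (p j) (h i 0) (x e j s) = of_int (sg e * a i j) * x e j s) \<and>
     (\<forall>i\<in>I. \<forall>j\<in>I. \<forall>k l. sbr (p i) (p j) (x True i k) (x False j l) = (if i = j then h i (k + l) else 0)) \<and>
     (\<forall>i\<in>I. \<forall>j\<in>I. (i, j) \<noteq> (m+1, m+1) \<longrightarrow> (\<forall>e k l.
        sbr False (p j) (h i (k+1)) (x e j l) = sbr False (p j) (h i k) (x e j (l+1))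
          + of_int (sg e) * half (a i j) * hb * (h i k * x e j l + x e j l * h i k) \<and>
        sbr (p i) (p j) (x e i (k+1)) (x e j l) = sbr (p i) (p j) (x e i k) (x e j (l+1))
          + of_int (sg e) * half (a i j) * hb * (x e i k * x e j l + x e j l * x e i k))) \<and>
     (\<forall>e k l. sbr False True (h (m+1) (k+1)) (x e (m+1) l) = 0 \<and>
              sbr True True (x e (m+1) (k+1)) (x e (m+1) l) = 0) \<and>
     (\<forall>i\<in>I. \<forall>j\<in>I. i \<noteq> j \<longrightarrow> (\<forall>e s (t::nat \<Rightarrow> nat).
        (let r = nat (1 - cartan_tilde i j) in
         (\<Sum>\<pi> | \<pi> permutes {1..r}. serre_nest m x e i j s (map (\<lambda>q. t (\<pi> q)) [1..<r+1])) = 0))) \<and>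
     (1 \<le> m \<and> 1 \<le> n \<longrightarrow> (\<forall>e k t.
        sbr True True (sbr False True (x e m k) (x e (m+1) 0)) (sbr True False (x e (m+1) 0) (x e (m+2) t)) = 0)))"

(* coefficient of u^{-k} in (\<Sum>_r h_r u^{-r-1})^n *)
fun hpow :: "(nat \<Rightarrow> 'a::ring_1) \<Rightarrow> nat \<Rightarrow> nat \<Rightarrow> 'a" where
  "hpow hh 0 k = (if k = 0 then 1 else 0)"
| "hpow hh (Suc n) k = (\<Sum>a<k. hh a * hpow hh n (k - Suc a))"

(* t_{i,r}: hbar t_r is the coefficient of u^{-r-1} in log(1 + hbar \<Sum>_r h_r u^{-r-1})
   = \<Sum>_{n\<ge>1} (-1)^(n+1)/n hbar^n (\<Sum>_r h_r u^{-r-1})^n *)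
definition tgen :: "(complex fps \<Rightarrow> 'a::ring_1) \<Rightarrow> (nat \<Rightarrow> 'a) \<Rightarrow> nat \<Rightarrow> 'a" where
  "tgen emb hh r = (\<Sum>n\<in>{1..r+1}. emb (fps_const ((-1) ^ (n+1) / of_nat n)) * emb fps_X ^ (n - 1) * hpow hh n (r+1))"

(* coefficient of v^N in q^{c v} = exp(hbar c v / 2), an element of C[[hbar]] *)
definition qcoef :: "int \<Rightarrow> nat \<Rightarrow> complex fps" where
  "qcoef c N = fps_const ((of_int c / 2) ^ N / fact N) * fps_X ^ N"

end

theory Submission
  imports Defs "HOL-Computational_Algebra.Polynomial"
begin


locale algl =
  fixes emb :: "complex fps \<Rightarrow> 'a::ring_1"
  assumes alg: "alg_structure emb"
begin

lemma emb1: "emb 1 = 1" using alg unfolding alg_structure_def by blast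
lemma emb_add: "emb (a + b) = emb a + emb b" using alg unfolding alg_structure_def by blast
lemma emb_mult: "emb (a * b) = emb a * emb b" using alg unfolding alg_structure_def by blast
lemma emb_central: "emb a * y = y * emb a" using alg unfolding alg_structure_def by blast
lemma emb0: "emb 0 = 0" using emb_add[of 0 0] by simp
lemma emb_uminus: "emb (- a) = - emb a"
proof -
  have "emb a + emb (- a) = 0" using emb_add[of a "-a"] emb0 by simp
  from add.inverse_unique[OF this] show ?thesis by simp
qed
lemma emb_diff: "emb (a - b) = emb a - emb b"
  using emb_add[of a "-b"] emb_uminus by simp
lemma emb_sum: "emb (sum f A) = (\<Sum>k\<in>A. emb (f k))"
  by (induction A rule: infinite_finite_induct) (auto simp: emb0 emb_add)
lemma emb_power: "emb (a ^ k) = emb a ^ k"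
  by (induction k) (auto simp: emb1 emb_mult)
lemma emb_of_nat: "emb (of_nat k) = of_nat k"
  by (induction k) (auto simp: emb1 emb0 emb_add)
lemma emb_of_int: "emb (of_int k) = of_int k"
  by (cases k rule: int_cases2) (auto simp: emb_of_nat emb_uminus)
lemma emb_central2: "y * emb a * z = emb a * (y * z)"
  by (metis emb_central mult.assoc)

lemmas embs = emb1 emb0 emb_add emb_mult emb_uminus emb_diff emb_sum emb_power emb_of_nat emb_of_int

end

locale ysetup = algl emb for emb :: "complex fps \<Rightarrow> 'a::ring_1" +
  fixes h :: "nat \<Rightarrow> 'a" and x :: "nat \<Rightarrow> 'a"
    and c :: complex
  assumes hcomm: "\<And>k l. h k * h l = h l * h k"
  and R0: "\<And>l. h 0 * x l - x l * h 0 = emb (fps_const (2*c)) * x l"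
  and R1: "\<And>k l. h (k+1) * x l - x l * h (k+1) = h k * x (l+1) - x (l+1) * h k
              + emb (fps_const c * fps_X) * (h k * x l + x l * h k)"
begin
unbundle fps_syntax

definition XP :: "nat \<Rightarrow> complex fps poly \<Rightarrow> 'a" where
  "XP s P = (\<Sum>k\<le>degree P. emb (coeff P k) * x (s+k))"

lemma XP_bound: "degree P \<le> N \<Longrightarrow> XP s P = (\<Sum>k\<le>N. emb (coeff P k) * x (s+k))"
proof -
  assume "degree P \<le> N"
  then have "(\<Sum>k\<le>N. emb (coeff P k) * x (s+k)) = (\<Sum>k\<le>degree P. emb (coeff P k) * x (s+k))"
    by (intro sum.mono_neutral_right) (auto simp: coeff_eq_0 emb0)
  then show ?thesis by (simp add: XP_def)
qed

lemma XP_add: "XP s (P + Q) = XP s P + XP s Q"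
proof -
  let ?N = "max (degree P) (degree Q)"
  have "degree (P + Q) \<le> ?N" by (rule degree_add_le) auto
  then show ?thesis
    by (simp add: XP_bound[of _ ?N] emb_add distrib_right sum.distrib)
qed

lemma XP_smult: "XP s (smult a P) = emb a * XP s P"
  by (simp add: XP_bound[of _ "degree P"] degree_smult_le emb_mult sum_distrib_left mult.assoc)

lemma XP_0[simp]: "XP s 0 = 0" by (simp add: XP_def emb0)

lemma XP_uminus: "XP s (- P) = - XP s P"
proof -
  have "XP s P + XP s (- P) = 0" using XP_add[of s P "-P"] by simp
  from add.inverse_unique[OF this] show ?thesis by simp
qed

lemma XP_diff: "XP s (P - Q) = XP s P - XP s Q"
  using XP_add[of s P "-Q"] XP_uminus by simp

lemma XP_sum: "XP s (sum f A) = (\<Sum>k\<in>A. XP s (f k))"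
  by (induction A rule: infinite_finite_induct) (auto simp: XP_add)

lemma XP_of_nat: "XP s (of_nat k * P) = of_nat k * XP s P"
proof -
  have "of_nat k * P = smult (of_nat k) P" by (simp add: of_nat_poly)
  then show ?thesis by (simp add: XP_smult emb_of_nat)
qed

lemma XP_pCons0: "XP s (pCons 0 P) = XP (Suc s) P"
proof -
  have "XP s (pCons 0 P) = (\<Sum>k\<le>Suc (degree P). emb (coeff (pCons 0 P) k) * x (s+k))"
    by (rule XP_bound) (simp add: degree_pCons_le)
  also have "\<dots> = emb (coeff (pCons 0 P) 0) * x s + (\<Sum>k\<le>degree P. emb (coeff P k) * x (Suc s+k))"
    by (subst sum.atMost_Suc_shift) simp
  also have "\<dots> = XP (Suc s) P" by (simp add: emb0 XP_def)
  finally show ?thesis .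
qed

lemma XP_const: "XP s [:a:] = emb a * x s"
  by (simp add: XP_def)

lemma XP_pCons: "XP s (pCons a P) = emb a * x s + XP (Suc s) P"
proof -
  have "XP s (pCons a P) = XP s ([:a:] + pCons 0 P)" by simp
  also have "\<dots> = emb a * x s + XP (Suc s) P" by (simp only: XP_add XP_const XP_pCons0)
  finally show ?thesis .
qed

definition dC :: "complex fps" where "dC = fps_const c * fps_X"
definition al :: "complex fps poly" where "al = [:dC, 1:]"
definition be :: "complex fps poly" where "be = [:- dC, 1:]"
definition hh :: "nat \<Rightarrow> 'a" where "hh k = (if k = 0 then 1 else emb fps_X * h (k - 1))"

lemma XP_al: "XP s (al * P) = XP (Suc s) P + emb dC * XP s P"
proof -
  have "al * P = smult dC P + pCons 0 P" by (simp add: al_def mult_pCons_left)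
  then show ?thesis by (simp add: XP_add XP_smult XP_pCons0 add.commute)
qed

lemma XP_be: "XP s (be * P) = XP (Suc s) P - emb dC * XP s P"
proof -
  have "be * P = smult (- dC) P + pCons 0 P" by (simp add: be_def mult_pCons_left)
  then show ?thesis by (simp add: XP_add XP_diff XP_smult XP_pCons0 emb_uminus)
qed

lemma cen: "y * emb a = emb a * y" by (rule emb_central[symmetric])
lemma cen2: "y * (emb a * z) = emb a * (y * z)"
  by (metis emb_central mult.assoc)

definition Rrel :: "nat \<Rightarrow> 'a \<Rightarrow> 'a \<Rightarrow> bool" where
  "Rrel k y y' \<longleftrightarrow> hh (Suc k) * y - y * hh (Suc k) = hh k * (y' + emb dC * y) - (y' - emb dC * y) * hh k"

lemma Rrel_add: "Rrel k y y' \<Longrightarrow> Rrel k z z' \<Longrightarrow> Rrel k (y + z) (y' + z')"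
  unfolding Rrel_def by (simp add: algebra_simps)

lemma Rrel_scale: "Rrel k y y' \<Longrightarrow> Rrel k (emb a * y) (emb a * y')"
proof -
  assume r: "Rrel k y y'"
  have "hh (Suc k) * (emb a * y) - emb a * y * hh (Suc k) = emb a * (hh (Suc k) * y - y * hh (Suc k))"
    by (simp add: cen2[of "hh (Suc k)"] algebra_simps)
  also have "\<dots> = emb a * (hh k * (y' + emb dC * y) - (y' - emb dC * y) * hh k)"
    using r by (simp add: Rrel_def)
  also have "\<dots> = hh k * (emb a * y' + emb dC * (emb a * y)) - (emb a * y' - emb dC * (emb a * y)) * hh k"
  proof -
    have "emb dC * (emb a * y) = emb a * (emb dC * y)" by (metis emb_central mult.assoc)
    then show ?thesis by (simp add: cen2[of "hh k"] algebra_simps)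
  qed
  finally show ?thesis by (simp add: Rrel_def)
qed

lemma B2: "emb fps_X * emb (fps_const (2 * c)) = emb dC + emb dC"
proof -
  have a1: "fps_const (2 * c) = fps_const c + (fps_const c :: complex fps)"
    by (simp add: fps_eq_iff)
  have "fps_X * fps_const (2 * c) = dC + dC" unfolding dC_def by (metis a1 distrib_left mult.commute)
  then show ?thesis by (metis emb_mult emb_add)
qed

lemma Rrel_base: "Rrel k (x l) (x (Suc l))"
proof (cases k)
  case 0
  have "hh (Suc 0) * x l - x l * hh (Suc 0) = emb fps_X * (h 0 * x l - x l * h 0)"
    by (simp add: hh_def cen2[of "x l"] algebra_simps)
  also have "\<dots> = (emb dC + emb dC) * x l" using R0 B2 by (simp add: mult.assoc[symmetric])
  also have "\<dots> = hh 0 * (x (Suc l) + emb dC * x l) - (x (Suc l) - emb dC * x l) * hh 0"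
    by (simp add: hh_def algebra_simps)
  finally show ?thesis using 0 by (simp add: Rrel_def)
next
  case (Suc k')
  have "hh (Suc k) * x l - x l * hh (Suc k) = emb fps_X * (h (Suc k') * x l - x l * h (Suc k'))"
    using Suc by (simp add: hh_def cen2[of "x l"] algebra_simps)
  also have "\<dots> = emb fps_X * (h k' * x (Suc l) - x (Suc l) * h k' + emb dC * (h k' * x l + x l * h k'))"
    using R1[of k' l] by (simp add: dC_def)
  also have "\<dots> = hh k * (x (Suc l) + emb dC * x l) - (x (Suc l) - emb dC * x l) * hh k"
  proof -
    have f3: "emb dC * (x l * (emb fps_X * z)) = emb fps_X * (emb dC * (x l * z))" for z
      by (metis emb_central mult.assoc)
    show ?thesis using Suc by (simp add: hh_def cen2[of "x (Suc l)"] cen2[of "h k'"] f3 algebra_simps)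
  qed
  finally show ?thesis by (simp add: Rrel_def)
qed

lemma Rrel_XP: "Rrel k (XP s P) (XP (Suc s) P)"
proof (induction P arbitrary: s)
  case 0
  then show ?case by (simp add: Rrel_def)
next
  case (pCons a P)
  have "Rrel k (emb a * x s + XP (Suc s) P) (emb a * x (Suc s) + XP (Suc (Suc s)) P)"
    by (intro Rrel_add Rrel_scale Rrel_base pCons.IH)
  then show ?case by (simp add: XP_pCons)
qed

lemma R_lift: "hh (Suc k) * XP s P - XP s P * hh (Suc k) = hh k * XP s (al * P) - XP s (be * P) * hh k"
  using Rrel_XP[of k s P] by (simp add: Rrel_def XP_al XP_be)

definition ph :: "nat \<Rightarrow> complex fps poly" where
  "ph k = (if k = 0 then 1 else (al - be) * al ^ (k - 1))"

lemma ph_Suc: "XP s (ph (Suc k) * P) = XP s (ph k * (al * P)) - (if k = 0 then XP s (be * P) else 0)"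
proof (cases k)
  case 0
  then show ?thesis by (simp add: ph_def algebra_simps XP_diff)
next
  case (Suc k')
  have eq: "ph (Suc k) * P = ph k * (al * P)" using Suc by (simp add: ph_def algebra_simps)
  show ?thesis unfolding eq using Suc by simp
qed

lemma hh_XP: "hh n * XP s P = (\<Sum>k\<le>n. XP s (ph k * P) * hh (n - k))"
proof (induction n arbitrary: P)
  case 0
  then show ?case by (simp add: hh_def ph_def)
next
  case (Suc n)
  have "hh (Suc n) * XP s P = XP s P * hh (Suc n) + (hh n * XP s (al * P) - XP s (be * P) * hh n)"
    using R_lift[of n s P] by (simp add: algebra_simps)
  also have "hh n * XP s (al * P) - XP s (be * P) * hh n
      = (\<Sum>k\<le>n. XP s (ph (Suc k) * P) * hh (n - k))"
  proof -
    have "(\<Sum>k\<le>n. XP s (ph (Suc k) * P) * hh (n - k))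
        = (\<Sum>k\<le>n. XP s (ph k * (al * P)) * hh (n - k) - (if k = 0 then XP s (be * P) * hh (n - k) else 0))"
      by (intro sum.cong refl) (simp add: ph_Suc left_diff_distrib)
    also have "\<dots> = (\<Sum>k\<le>n. XP s (ph k * (al * P)) * hh (n - k)) - XP s (be * P) * hh n"
      by (simp add: sum_subtractf)
    finally show ?thesis using Suc.IH[of "al * P"] by simp
  qed
  also have "XP s P * hh (Suc n) + (\<Sum>k\<le>n. XP s (ph (Suc k) * P) * hh (n - k))
      = (\<Sum>k\<le>Suc n. XP s (ph k * P) * hh (Suc n - k))"
    by (subst sum.atMost_Suc_shift) (simp add: ph_def)
  finally show ?case .
qed

lemma fps_comm: "(\<And>a b. f $ a * g $ b = g $ b * f $ a) \<Longrightarrow> f * g = (g * (f :: 'a fps))"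
proof (rule fps_ext)
  fix n assume H: "\<And>a b. f $ a * g $ b = g $ b * f $ a"
  have "(f * g) $ n = (\<Sum>i=0..n. g $ (n - i) * f $ i)" by (simp add: fps_mult_nth H)
  also have "\<dots> = (\<Sum>i=0..n. g $ (n - (n + 0 - i)) * f $ (n + 0 - i))"
    by (rule sum.atLeastAtMost_rev)
  also have "\<dots> = (g * f) $ n" by (simp add: fps_mult_nth)
  finally show "(f * g) $ n = (g * f) $ n" .
qed

lemma fps_comm_power: "f * g = g * (f :: 'a fps) \<Longrightarrow> f ^ k * g = g * f ^ k"
  by (induction k) (simp_all add: mult.assoc[symmetric], metis mult.assoc)

definition Hs :: "'a fps" where "Hs = Abs_fps (\<lambda>k. if k = 0 then 0 else h (k - 1))"
definition Gf :: "'a fps" where "Gf = fps_const (emb fps_X) * Hs"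
definition Lf :: "'a fps" where "Lf = Abs_fps (\<lambda>k. if k = 0 then 0 else emb fps_X * tgen emb h (k - 1))"
definition ell :: "nat \<Rightarrow> 'a" where "ell k = of_nat (Suc k) * (emb fps_X * tgen emb h k)"

lemma hpow_Hs: "hpow h n k = (Hs ^ n) $ k"
proof (induction n arbitrary: k)
  case 0
  then show ?case by simp
next
  case (Suc n)
  show ?case
  proof (cases k)
    case 0
    then show ?thesis by (simp add: fps_mult_nth Hs_def)
  next
    case (Suc k')
    have "(Hs ^ Suc n) $ k = (\<Sum>i=0..Suc k'. Hs $ i * (Hs ^ n) $ (Suc k' - i))"
      using Suc by (simp add: fps_mult_nth)
    also have "\<dots> = (\<Sum>i=0..k'. h i * (Hs ^ n) $ (k' - i))"
      by (subst sum.atLeast0_atMost_Suc_shift) (simp add: Hs_def)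
    also have "\<dots> = hpow h (Suc n) k"
      using Suc by (simp add: Suc.IH lessThan_Suc_atMost atLeast0AtMost)
    finally show ?thesis by simp
  qed
qed

lemma hpow_zero: "k < n \<Longrightarrow> hpow h n k = 0"
proof (induction n arbitrary: k)
  case 0 then show ?case by simp
next
  case (Suc n)
  have "hpow h n (k - Suc a) = 0" if "a < k" for a using Suc that by auto
  then show ?case by simp
qed

lemma constB_comm: "fps_const (emb a) * f = f * fps_const (emb a)"
  by (rule fps_ext) (simp add: emb_central)

lemma Gf_power: "Gf ^ n = fps_const (emb fps_X ^ n) * Hs ^ n"
proof (induction n)
  case 0 then show ?case by simp
next
  case (Suc n)
  have "Gf ^ Suc n = Gf * (fps_const (emb fps_X ^ n) * Hs ^ n)" using Suc by simp
  also have "\<dots> = fps_const (emb fps_X) * (Hs * fps_const (emb fps_X ^ n)) * Hs ^ n"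
    by (simp add: Gf_def mult.assoc)
  also have "Hs * fps_const (emb fps_X ^ n) = fps_const (emb fps_X ^ n) * Hs"
    by (metis constB_comm emb_power)
  finally have "Gf ^ Suc n = fps_const (emb fps_X) * (fps_const (emb fps_X ^ n) * Hs) * Hs ^ n" .
  also have "\<dots> = (fps_const (emb fps_X) * fps_const (emb fps_X ^ n)) * (Hs * Hs ^ n)"
    by (simp only: mult.assoc)
  also have "fps_const (emb fps_X) * fps_const (emb fps_X ^ n) = fps_const (emb fps_X ^ Suc n)"
    by (simp only: fps_const_mult power_Suc)
  finally show ?case by (simp only: power_Suc)
qed

lemma Gf_power_nth: "(Gf ^ n) $ k = emb fps_X ^ n * hpow h n k"
  by (simp add: Gf_power hpow_Hs)

lemma Gf_nth: "Gf $ k = (if k = 0 then 0 else emb fps_X * h (k - 1))"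
  by (simp add: Gf_def Hs_def)

lemma hh_Hf: "(1 + Gf) $ k = hh k"
  by (simp add: Gf_nth hh_def)

lemma ofnat_left: "y * (of_nat q * z) = of_nat q * (y * z)"
  by (metis mult.assoc mult_of_nat_commute)

lemma h_comm_gen: "(of_nat p * (emb a * h k)) * (of_nat q * (emb b * h l))
     = (of_nat q * (emb b * h l)) * (of_nat p * (emb a * h k))"
proof -
  have r1: "h k * (of_nat q * z) = of_nat q * (h k * z)" for z by (rule ofnat_left)
  have r2: "emb a * (of_nat q * z) = of_nat q * (emb a * z)" for z by (rule ofnat_left)
  have r3: "h k * (emb b * z) = emb b * (h k * z)" for z by (rule cen2)
  have s1: "h l * (of_nat p * z) = of_nat p * (h l * z)" for z by (rule ofnat_left)
  have s2: "emb b * (of_nat p * z) = of_nat p * (emb b * z)" for z by (rule ofnat_left)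
  have s3: "h l * (emb a * z) = emb a * (h l * z)" for z by (rule cen2)
  have t1: "(of_nat q :: 'a) * (of_nat p * z) = of_nat p * (of_nat q * z)" for z by (rule ofnat_left)
  have t2: "emb b * (emb a * z) = emb a * (emb b * z)" for z by (rule cen2)
  have t3: "h l * h k = h k * h l" by (rule hcomm)
  show ?thesis by (simp only: mult.assoc r1 r2 r3 s1 s2 s3 t1 t2 t3)
qed

lemma Gf_deriv_comm: "Gf * fps_deriv Gf = fps_deriv Gf * Gf"
proof (rule fps_comm)
  fix a b
  show "Gf $ a * fps_deriv Gf $ b = fps_deriv Gf $ b * Gf $ a"
    using h_comm_gen[of 1 fps_X "a - 1" "Suc b" fps_X b] by (simp add: Gf_nth)
qed

lemma Gf_deriv_power: "fps_deriv (Gf ^ Suc n) = of_nat (Suc n) * Gf ^ n * fps_deriv Gf"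
proof (induction n)
  case 0 then show ?case by simp
next
  case (Suc n)
  have c: "fps_deriv Gf * Gf ^ Suc n = Gf ^ Suc n * fps_deriv Gf"
    by (metis fps_comm_power[OF Gf_deriv_comm])
  have "fps_deriv (Gf ^ Suc (Suc n)) = Gf * fps_deriv (Gf ^ Suc n) + fps_deriv Gf * Gf ^ Suc n"
    by (metis fps_deriv_mult power_Suc)
  also have "\<dots> = Gf * (of_nat (Suc n) * Gf ^ n * fps_deriv Gf) + Gf ^ Suc n * fps_deriv Gf"
    using Suc c by simp
  also have "Gf * (of_nat (Suc n) * Gf ^ n * fps_deriv Gf) = of_nat (Suc n) * Gf ^ Suc n * fps_deriv Gf"
    by (metis mult.assoc mult_of_nat_commute power_Suc)
  also have "of_nat (Suc n) * Gf ^ Suc n * fps_deriv Gf + Gf ^ Suc n * fps_deriv Gf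
      = (of_nat (Suc n) + 1) * Gf ^ Suc n * fps_deriv Gf"
    by (simp add: distrib_right)
  also have "(of_nat (Suc n) + 1 :: 'a fps) = of_nat (Suc (Suc n))" by simp
  finally show ?case .
qed

definition cn :: "nat \<Rightarrow> complex fps" where "cn n = fps_const ((-1) ^ (n+1) / of_nat n)"
definition LN :: "nat \<Rightarrow> 'a fps" where "LN N = (\<Sum>n\<in>{1..N}. fps_const (emb (cn n)) * Gf ^ n)"

lemma Lf_nth_Suc: "Lf $ Suc k = emb fps_X * tgen emb h k"
  by (simp add: Lf_def)

lemma LN_nth: "k \<le> N \<Longrightarrow> LN N $ k = Lf $ k"
proof -
  assume kN: "k \<le> N"
  have L1: "LN N $ k = (\<Sum>n\<in>{1..N}. emb (cn n) * (emb fps_X ^ n * hpow h n k))"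
    by (simp add: LN_def fps_sum_nth Gf_power_nth)
  show ?thesis
  proof (cases k)
    case 0
    then show ?thesis using L1 by (simp add: Lf_def hpow_zero)
  next
    case (Suc r)
    have "(\<Sum>n\<in>{1..N}. emb (cn n) * (emb fps_X ^ n * hpow h n k))
        = (\<Sum>n\<in>{1..r+1}. emb (cn n) * (emb fps_X ^ n * hpow h n k))"
      using kN Suc by (intro sum.mono_neutral_right) (auto simp: hpow_zero)
    also have "\<dots> = emb fps_X * tgen emb h r"
      unfolding tgen_def sum_distrib_left
    proof (intro sum.cong refl)
      fix n assume n: "n \<in> {1..r+1}"
      then obtain m where m: "n = Suc m" by (cases n) auto
      have "emb fps_X * (emb (fps_const ((- 1) ^ (n + 1) / of_nat n)) * emb fps_X ^ (n - 1) * hpow h n (r + 1))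
          = emb (cn n) * (emb fps_X * (emb fps_X ^ m * hpow h n (r + 1)))"
        by (simp add: m cn_def mult.assoc[symmetric] emb_central[of _ "emb fps_X"])
      also have "\<dots> = emb (cn n) * (emb fps_X ^ n * hpow h n k)"
        by (simp add: m Suc mult.assoc)
      finally show "emb (cn n) * (emb fps_X ^ n * hpow h n k) =
         emb fps_X * (emb (fps_const ((- 1) ^ (n + 1) / of_nat n)) * emb fps_X ^ (n - 1) * hpow h n (r + 1))"
        by simp
    qed
    finally show ?thesis using L1 Suc by (simp add: Lf_nth_Suc)
  qed
qed

lemma fps_const_m1_power: "fps_const ((-1::'b::ring_1) ^ k) = (-1) ^ k"
  by (simp only: fps_const_power[symmetric] fps_const_neg[symmetric] fps_const_1_eq_1)

lemma emb_cn: "n \<ge> 1 \<Longrightarrow> fps_const (emb (cn n)) * (of_nat n :: 'a fps) = fps_const ((-1) ^ (n+1))"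
proof -
  assume n: "n \<ge> 1"
  have "cn n * of_nat n = fps_const ((-1) ^ (n+1) / of_nat n * of_nat n)"
    by (simp only: cn_def fps_of_nat[symmetric] fps_const_mult)
  also have "\<dots> = fps_const ((-1) ^ (n+1))" using n by simp
  also have "\<dots> = (-1) ^ (n+1)" by (rule fps_const_m1_power)
  finally have "emb (cn n) * of_nat n = (-1) ^ (n+1)"
    by (metis emb_mult emb_of_nat emb_power emb_uminus emb1)
  then show ?thesis by (simp only: fps_of_nat[symmetric] fps_const_mult)
qed

end


unbundle fps_syntax
context ysetup begin

lemma LN_deriv: "fps_deriv (LN N) = (\<Sum>m<N. fps_const ((-1) ^ m) * Gf ^ m * fps_deriv Gf)"
proof -
  have "fps_deriv (LN N) = (\<Sum>n\<in>{1..N}. fps_const (emb (cn n)) * fps_deriv (Gf ^ n))"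
    by (simp add: LN_def fps_deriv_sum)
  also have "\<dots> = (\<Sum>m<N. fps_const (emb (cn (Suc m))) * fps_deriv (Gf ^ Suc m))"
    by (rule sum.reindex_bij_witness[where i=Suc and j="\<lambda>n. n - 1"]) auto
  also have "\<dots> = (\<Sum>m<N. fps_const ((-1) ^ m) * Gf ^ m * fps_deriv Gf)"
  proof (intro sum.cong refl)
    fix m
    have "fps_const (emb (cn (Suc m))) * fps_deriv (Gf ^ Suc m)
        = (fps_const (emb (cn (Suc m))) * of_nat (Suc m)) * Gf ^ m * fps_deriv Gf"
      by (simp only: Gf_deriv_power mult.assoc)
    also have "\<dots> = fps_const ((-1) ^ m) * Gf ^ m * fps_deriv Gf"
      using emb_cn[of "Suc m"] by simp
    finally show "fps_const (emb (cn (Suc m))) * fps_deriv (Gf ^ Suc m) = fps_const ((-1) ^ m) * Gf ^ m * fps_deriv Gf" .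
  qed
  finally show ?thesis .
qed

lemma telescope: "(\<Sum>m<N. fps_const ((-1) ^ m) * Gf ^ m * (1 + Gf)) = 1 - fps_const ((-1) ^ N) * Gf ^ N"
proof (induction N)
  case 0 then show ?case by simp
next
  case (Suc N)
  have "(\<Sum>m<Suc N. fps_const ((-1) ^ m) * Gf ^ m * (1 + Gf))
      = 1 - fps_const ((-1) ^ N) * Gf ^ N + fps_const ((-1) ^ N) * Gf ^ N * (1 + Gf)"
    using Suc by simp
  also have "\<dots> = 1 + fps_const ((-1) ^ N) * Gf ^ Suc N"
    by (simp add: algebra_simps power_commutes)
  also have "\<dots> = 1 - fps_const ((-1) ^ Suc N) * Gf ^ Suc N"
  proof -
    have "fps_const ((-1::'a) ^ Suc N) = - fps_const ((-1) ^ N)" by simp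
    then show ?thesis by (simp only: mult_minus_left diff_minus_eq_add)
  qed
  finally show ?case .
qed

lemma LN_deriv_mult: "fps_deriv (LN N) * (1 + Gf) = (1 - fps_const ((-1) ^ N) * Gf ^ N) * fps_deriv Gf"
proof -
  have c: "fps_deriv Gf * (1 + Gf) = (1 + Gf) * fps_deriv Gf"
    using Gf_deriv_comm by (simp add: algebra_simps)
  have "fps_deriv (LN N) * (1 + Gf) = (\<Sum>m<N. fps_const ((-1) ^ m) * Gf ^ m * (fps_deriv Gf * (1 + Gf)))"
    by (simp add: LN_deriv sum_distrib_right mult.assoc)
  also have "\<dots> = (\<Sum>m<N. fps_const ((-1) ^ m) * Gf ^ m * (1 + Gf)) * fps_deriv Gf"
    by (simp only: c sum_distrib_right mult.assoc)
  finally show ?thesis by (simp only: telescope)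
qed

lemma LOG: "of_nat (Suc n) * hh (Suc n) = (\<Sum>a\<le>n. ell a * hh (n - a))"
proof -
  define N where "N = Suc (Suc n)"
  have "(fps_deriv Lf * (1 + Gf)) $ n = (fps_deriv (LN N) * (1 + Gf)) $ n"
    unfolding fps_mult_nth
    by (intro sum.cong refl) (simp add: LN_nth N_def)
  also have "\<dots> = fps_deriv Gf $ n - ((fps_const ((-1) ^ N) * Gf ^ N) * fps_deriv Gf) $ n"
    by (simp only: LN_deriv_mult left_diff_distrib mult_1_left fps_sub_nth)
  also have "((fps_const ((-1) ^ N) * Gf ^ N) * fps_deriv Gf) $ n = 0"
  proof -
    have z: "(Gf ^ N) $ i = 0" if "i \<le> n" for i
    proof -
      have "i < N" using that N_def by simp
      then show ?thesis by (simp only: Gf_power_nth hpow_zero mult_zero_right)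
    qed
    have "(Gf ^ N * fps_deriv Gf) $ n = 0"
      unfolding fps_mult_nth
      by (intro sum.neutral) (simp add: z)
    then show ?thesis by (simp add: mult.assoc)
  qed
  finally have "(fps_deriv Lf * (1 + Gf)) $ n = of_nat (Suc n) * hh (Suc n)"
    by (simp add: Gf_nth hh_def)
  moreover have "(fps_deriv Lf * (1 + Gf)) $ n = (\<Sum>a\<le>n. ell a * hh (n - a))"
    unfolding fps_mult_nth atLeast0AtMost
    by (intro sum.cong refl) (simp add: ell_def Lf_nth_Suc Gf_nth hh_def)
  ultimately show ?thesis by simp
qed

definition ep :: "nat \<Rightarrow> complex fps poly" where "ep n = al ^ Suc n - be ^ Suc n"

lemma ph_Suc_poly: "ph (Suc m) = ph m * al - (if m = 0 then be else 0)"
  by (cases m) (simp_all add: ph_def algebra_simps)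

lemma POLY: "(\<Sum>a\<le>n. ep a * ph (n - a)) = of_nat (Suc n) * ((al - be) * al ^ n)"
proof (induction n)
  case 0 then show ?case by (simp add: ep_def ph_def)
next
  case (Suc n)
  have "(\<Sum>a\<le>n. ep a * ph (Suc n - a)) = (\<Sum>a\<le>n. al * (ep a * ph (n - a)) - (if a = n then ep n * be else 0))"
  proof (intro sum.cong refl)
    fix a assume "a \<in> {..n}"
    then have "Suc n - a = Suc (n - a)" by auto
    then show "ep a * ph (Suc n - a) = al * (ep a * ph (n - a)) - (if a = n then ep n * be else 0)"
      by (auto simp: ph_Suc_poly algebra_simps)
  qed
  also have "\<dots> = al * (\<Sum>a\<le>n. ep a * ph (n - a)) - ep n * be"
    by (simp add: sum_subtractf sum_distrib_left)
  finally have e: "(\<Sum>a\<le>n. ep a * ph (Suc n - a)) = al * (of_nat (Suc n) * ((al - be) * al ^ n)) - ep n * be"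
    using Suc by simp
  have "(\<Sum>a\<le>Suc n. ep a * ph (Suc n - a)) = (\<Sum>a\<le>n. ep a * ph (Suc n - a)) + ep (Suc n)"
    by (simp add: ph_def)
  also have "\<dots> = of_nat (Suc (Suc n)) * ((al - be) * al ^ Suc n)"
    by (simp only: e) (simp add: ep_def algebra_simps)
  finally show ?case .
qed

definition XFP :: "nat \<Rightarrow> complex fps poly \<Rightarrow> 'a fps" where
  "XFP s P = Abs_fps (\<lambda>k. XP s (ph k * P))"

lemma fact_A: "(1 + Gf) * fps_const (XP s P) = XFP s P * (1 + Gf)"
proof (rule fps_ext)
  fix n
  have "((1 + Gf) * fps_const (XP s P)) $ n = hh n * XP s P"
    by (simp only: fps_mult_right_const_nth hh_Hf)
  also have "\<dots> = (\<Sum>k\<le>n. XP s (ph k * P) * hh (n - k))" by (rule hh_XP)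
  also have "\<dots> = (XFP s P * (1 + Gf)) $ n"
    unfolding fps_mult_nth atLeast0AtMost by (intro sum.cong refl) (simp add: XFP_def Gf_nth hh_def)
  finally show "((1 + Gf) * fps_const (XP s P)) $ n = (XFP s P * (1 + Gf)) $ n" .
qed

lemma fact_B: "fps_deriv Lf * (1 + Gf) = fps_deriv (1 + Gf)"
proof (rule fps_ext)
  fix n
  have "(fps_deriv Lf * (1 + Gf)) $ n = (\<Sum>a\<le>n. ell a * hh (n - a))"
    unfolding fps_mult_nth atLeast0AtMost
    by (intro sum.cong refl) (simp add: ell_def Lf_nth_Suc Gf_nth hh_def)
  also have "\<dots> = of_nat (Suc n) * hh (Suc n)" by (rule LOG[symmetric])
  also have "\<dots> = fps_deriv (1 + Gf) $ n" by (simp add: hh_def Gf_nth)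
  finally show "(fps_deriv Lf * (1 + Gf)) $ n = fps_deriv (1 + Gf) $ n" .
qed

lemma cancel_right: "F * H = 0 \<Longrightarrow> H $ 0 = 1 \<Longrightarrow> F = (0 :: 'a fps)"
proof -
  assume FH: "F * H = 0" and H0: "H $ 0 = 1"
  have "F $ n = 0" for n
  proof (induction n rule: less_induct)
    case (less n)
    have "0 = (F * H) $ n" using FH by simp
    also have "\<dots> = (\<Sum>i\<in>{0..<n}. F $ i * H $ (n - i)) + F $ n * H $ 0"
      unfolding fps_mult_nth by (simp add: atLeastLessThanSuc_atLeastAtMost[symmetric])
    also have "\<dots> = F $ n" using less H0 by simp
    finally show ?case by simp
  qed
  then show ?thesis by (simp add: fps_eq_iff)
qed

lemma KEYF: "fps_deriv Lf * XFP s P - XFP s P * fps_deriv Lf = fps_deriv (XFP s P)"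
proof -
  define D where "D = fps_deriv Lf"
  define H where "H = 1 + Gf"
  define X where "X = XFP s P"
  define Y where "Y = fps_const (XP s P)"
  have A: "H * Y = X * H" unfolding H_def X_def Y_def by (rule fact_A)
  have B: "D * H = fps_deriv H" unfolding D_def H_def by (rule fact_B)
  have "fps_deriv (H * Y) = fps_deriv (X * H)" using A by simp
  then have "fps_deriv H * Y = X * fps_deriv H + fps_deriv X * H"
    by (simp add: Y_def)
  moreover have "D * X * H = fps_deriv H * Y" by (metis A B mult.assoc)
  moreover have "X * fps_deriv H = X * D * H" by (metis B mult.assoc)
  ultimately have "D * X * H = X * D * H + fps_deriv X * H" by simp
  then have "(D * X - X * D - fps_deriv X) * H = 0"
    by (simp add: algebra_simps)
  moreover have "H $ 0 = 1" by (simp add: H_def Gf_nth)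
  ultimately have "D * X - X * D - fps_deriv X = 0" by (rule cancel_right)
  then show ?thesis by (simp add: D_def X_def)
qed

lemma KEY: "(\<Sum>a\<le>n. ell a * XP s (ph (n - a) * P) - XP s (ph (n - a) * P) * ell a)
    = of_nat (Suc n) * XP s (ph (Suc n) * P)"
proof -
  have "(fps_deriv Lf * XFP s P - XFP s P * fps_deriv Lf) $ n = fps_deriv (XFP s P) $ n"
    using KEYF by simp
  moreover have "(fps_deriv Lf * XFP s P) $ n = (\<Sum>a\<le>n. ell a * XP s (ph (n - a) * P))"
    unfolding fps_mult_nth atLeast0AtMost
    by (intro sum.cong refl) (simp add: ell_def Lf_nth_Suc XFP_def)
  moreover have "(XFP s P * fps_deriv Lf) $ n = (\<Sum>a\<le>n. XP s (ph (n - a) * P) * ell a)"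
  proof -
    have "(XFP s P * fps_deriv Lf) $ n = (\<Sum>i=0..n. XP s (ph i * P) * ell (n - i))"
      unfolding fps_mult_nth by (intro sum.cong refl) (simp add: ell_def Lf_nth_Suc XFP_def)
    also have "\<dots> = (\<Sum>i=0..n. XP s (ph (n + 0 - i) * P) * ell (n - (n + 0 - i)))"
      by (rule sum.atLeastAtMost_rev)
    also have "\<dots> = (\<Sum>a\<le>n. XP s (ph (n - a) * P) * ell a)"
      unfolding atLeast0AtMost by (intro sum.cong refl) auto
    finally show ?thesis .
  qed
  ultimately show ?thesis by (simp add: XFP_def sum_subtractf)
qed

lemma add_solve: "u + v = w \<Longrightarrow> v = w - (u :: 'b :: ab_group_add)"
  by (simp add: algebra_simps)

lemma MAIN: "ell n * XP s P - XP s P * ell n = XP s (ep n * P)"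
proof (induction n arbitrary: P rule: less_induct)
  case (less n)
  define f where "f a = ell a * XP s (ph (n - a) * P) - XP s (ph (n - a) * P) * ell a" for a
  have d: "(\<Sum>a\<le>n. f a) = (\<Sum>a<n. f a) + f n"
    by (simp only: lessThan_Suc_atMost[symmetric] sum.lessThan_Suc)
  have p0: "ph 0 * P = P" by (simp add: ph_def)
  have fn: "f n = ell n * XP s P - XP s P * ell n" by (simp add: f_def p0)
  have fa: "(\<Sum>a<n. f a) = (\<Sum>a<n. XP s (ep a * (ph (n - a) * P)))"
    by (intro sum.cong refl) (simp add: f_def less.IH)
  have k: "(\<Sum>a<n. XP s (ep a * (ph (n - a) * P))) + (ell n * XP s P - XP s P * ell n)
      = of_nat (Suc n) * XP s (ph (Suc n) * P)"
  proof -
    have "(\<Sum>a\<le>n. f a) = of_nat (Suc n) * XP s (ph (Suc n) * P)"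
      unfolding f_def by (rule KEY)
    then show ?thesis by (simp only: d fn fa)
  qed
  then have "ell n * XP s P - XP s P * ell n
      = of_nat (Suc n) * XP s (ph (Suc n) * P) - (\<Sum>a<n. XP s (ep a * (ph (n - a) * P)))"
    by (rule add_solve)
  also have "\<dots> = XP s ((of_nat (Suc n) * ph (Suc n) - (\<Sum>a<n. ep a * ph (n - a))) * P)"
  proof -
    have "(of_nat (Suc n) * ph (Suc n) - (\<Sum>a<n. ep a * ph (n - a))) * P
        = of_nat (Suc n) * (ph (Suc n) * P) - (\<Sum>a<n. ep a * (ph (n - a) * P))"
      by (simp only: left_diff_distrib sum_distrib_right mult.assoc)
    then show ?thesis by (simp only: XP_diff XP_of_nat XP_sum)
  qed
  also have "of_nat (Suc n) * ph (Suc n) - (\<Sum>a<n. ep a * ph (n - a)) = ep n"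
  proof -
    have "(\<Sum>a\<le>n. ep a * ph (n - a)) = (\<Sum>a<n. ep a * ph (n - a)) + ep n * ph 0"
      by (simp only: lessThan_Suc_atMost[symmetric] sum.lessThan_Suc diff_self_eq_0)
    then have "(\<Sum>a<n. ep a * ph (n - a)) + ep n = of_nat (Suc n) * ((al - be) * al ^ n)"
      using POLY[of n] by (simp add: ph_def)
    moreover have "ph (Suc n) = (al - be) * al ^ n" by (simp add: ph_def)
    ultimately show ?thesis by (metis add_solve)
  qed
  finally show ?case .
qed


lemma XP_monom: "XP s (monom a k) = emb a * x (s + k)"
proof -
  have "XP s (monom a k) = (\<Sum>i\<le>k. emb (coeff (monom a k) i) * x (s + i))"
    by (rule XP_bound) (simp add: degree_monom_le)
  also have "\<dots> = (\<Sum>i\<le>k. if i = k then emb a * x (s + k) else 0)"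
    by (intro sum.cong refl) (auto simp: coeff_monom emb0)
  also have "\<dots> = emb a * x (s + k)" by simp
  finally show ?thesis .
qed

lemma XP_lin_pow: "XP s ([:d, 1:] ^ N) = (\<Sum>k\<le>N. emb (of_nat (N choose k) * d ^ (N - k)) * x (s + k))"
proof -
  have "[:d, 1:] = monom 1 1 + [:d:]" by (simp add: monom_Suc)
  then have "[:d, 1:] ^ N = (\<Sum>k\<le>N. of_nat (N choose k) * monom 1 1 ^ k * [:d:] ^ (N - k))"
    by (simp add: binomial_ring)
  also have "\<dots> = (\<Sum>k\<le>N. monom (of_nat (N choose k) * d ^ (N - k)) k)"
  proof (intro sum.cong refl)
    fix k
    have "of_nat (N choose k) * monom 1 1 ^ k * [:d:] ^ (N - k)
        = smult (of_nat (N choose k) * d ^ (N - k)) (monom 1 k)"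
    proof -
      have "of_nat (N choose k) * monom 1 1 ^ k * [:d:] ^ (N - k)
          = [:d ^ (N - k):] * smult (of_nat (N choose k)) (monom 1 k)"
        by (simp add: monom_power of_nat_poly poly_const_pow mult.commute)
      also have "\<dots> = smult (d ^ (N - k)) (smult (of_nat (N choose k)) (monom 1 k))" by (simp add: mult.commute)
      finally show ?thesis by (simp add: mult.commute)
    qed
    then show "of_nat (N choose k) * monom 1 1 ^ k * [:d:] ^ (N - k) = monom (of_nat (N choose k) * d ^ (N - k)) k"
      by (simp add: smult_monom)
  qed
  finally show ?thesis by (simp add: XP_sum XP_monom)
qed

end


unbundle fps_syntax

lemma scal_eq:
  fixes sgn aa :: int and u :: complex
  assumes "k \<le> p" "sgn = 1 \<or> sgn = -1" "u = of_int sgn * of_int aa / 2"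
  shows "1 / fact (Suc p) * of_nat (Suc p choose k) * (u ^ (Suc p - k) - (- u) ^ (Suc p - k))
    = of_int sgn * ((of_int aa / 2) ^ (Suc p - k) / fact (Suc p - k) - (of_int (- aa) / 2) ^ (Suc p - k) / fact (Suc p - k)) * (1 / fact k)"
proof -
  define M where "M = Suc p - k"
  have b: "(of_nat (Suc p choose k) :: complex) = fact (Suc p) / (fact k * fact M)"
    using assms(1) by (simp add: binomial_fact M_def)
  have f: "1 / fact (Suc p) * (of_nat (Suc p choose k) :: complex) = 1 / (fact k * fact M)"
  proof -
    have "(fact (Suc p) :: complex) \<noteq> 0" by (rule fact_nonzero)
    then show ?thesis unfolding b by (simp del: fact_Suc)
  qed
  have g: "u ^ M - (- u) ^ M = of_int sgn * ((of_int aa / 2) ^ M - (of_int (- aa) / 2) ^ M)"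
    using assms(2)
  proof
    assume "sgn = 1"
    then have "u = of_int aa / 2" using assms(3) by simp
    moreover have e: "of_int (-aa) / 2 = - (of_int aa / 2 :: complex)" by simp
    ultimately show ?thesis using \<open>sgn = 1\<close> by (simp only: e) simp
  next
    assume "sgn = -1"
    then have "u = - (of_int aa / 2)" using assms(3) by simp
    moreover have e: "of_int (-aa) / 2 = - (of_int aa / 2 :: complex)" by simp
    ultimately show ?thesis using \<open>sgn = -1\<close> by (simp only: e) simp
  qed
  show ?thesis unfolding M_def[symmetric] f g by (simp add: field_simps)
qed

lemma coef_eq:
  fixes sgn aa :: int and u :: complex
  assumes "k \<le> p" "sgn = 1 \<or> sgn = -1" "u = of_int sgn * of_int aa / 2"
  shows "fps_const (1 / fact (Suc p)) * (of_nat (Suc p choose k) * ((fps_const u * fps_X) ^ (Suc p - k) - (- (fps_const u * fps_X)) ^ (Suc p - k)))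
    = of_int sgn * (qcoef aa (p - k + 1) - qcoef (- aa) (p - k + 1)) * fps_const (1 / fact k)"
proof -
  define M where "M = Suc p - k"
  have M1: "p - k + 1 = M" using assms(1) by (simp add: M_def)
  have "fps_const (1 / fact (Suc p)) * (of_nat (Suc p choose k) * ((fps_const u * fps_X) ^ M - (- (fps_const u * fps_X)) ^ M))
     = fps_const (1 / fact (Suc p) * of_nat (Suc p choose k) * (u ^ M - (- u) ^ M)) * fps_X ^ M"
  proof -
    have p1: "(fps_const u * fps_X) ^ M = fps_const (u ^ M) * fps_X ^ M"
      by (simp add: power_mult_distrib)
    have p2: "(- (fps_const u * fps_X)) ^ M = fps_const ((- u) ^ M) * fps_X ^ M"
    proof -
      have "- (fps_const u * fps_X) = fps_const (- u) * fps_X" by (metis fps_const_neg mult_minus_left)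
      then show ?thesis by (simp only: power_mult_distrib fps_const_power)
    qed
    have "(fps_const u * fps_X) ^ M - (- (fps_const u * fps_X)) ^ M = fps_const (u ^ M - (- u) ^ M) * fps_X ^ M"
      unfolding p1 p2 by (simp only: left_diff_distrib[symmetric] fps_const_sub)
    moreover have "(of_nat (Suc p choose k) :: complex fps) = fps_const (of_nat (Suc p choose k))"
      by (simp add: fps_of_nat)
    ultimately show ?thesis by (simp add: mult.assoc)
  qed
  also have "\<dots> = fps_const (of_int sgn * ((of_int aa / 2) ^ M / fact M - (of_int (- aa) / 2) ^ M / fact M) * (1 / fact k)) * fps_X ^ M"
    using scal_eq[OF assms] by (simp add: M_def)
  also have "\<dots> = of_int sgn * (qcoef aa M - qcoef (- aa) M) * fps_const (1 / fact k)"
  proof -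
    have q: "qcoef aa M - qcoef (- aa) M = fps_const ((of_int aa / 2) ^ M / fact M - (of_int (- aa) / 2) ^ M / fact M) * fps_X ^ M"
      unfolding qcoef_def by (simp only: left_diff_distrib[symmetric] fps_const_sub)
    have t1: "fps_const a * (fps_const b * fps_X ^ M) * fps_const c = fps_const (a*b*c) * (fps_X ^ M :: complex fps)" for a b c
      by (metis (no_types, lifting) fps_const_mult mult.assoc mult.commute)
    have t2: "(of_int sgn :: complex fps) = fps_const (of_int sgn)" by (simp add: fps_of_int)
    show ?thesis unfolding q t2 t1 ..
  qed
  finally show ?thesis unfolding M1 M_def[symmetric] .
qed




unbundle fps_syntax
context ysetup begin

lemma FINAL:
  fixes sgn aa :: int
  assumes cdef: "c = of_int sgn * of_int aa / 2" and sgn: "sgn = 1 \<or> sgn = -1"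
  shows "emb fps_X * (emb (fps_const (1 / fact p)) * tgen emb h p) * x s
       - x s * (emb fps_X * (emb (fps_const (1 / fact p)) * tgen emb h p))
    = of_int sgn * (\<Sum>k\<le>p. emb (qcoef aa (p - k + 1) - qcoef (- aa) (p - k + 1))
                                * (emb (fps_const (1 / fact k)) * x (s + k)))"
proof -
  define t where "t = tgen emb h p"
  define F where "F = emb (fps_const (1 / fact (Suc p)))"
  define E where "E = emb (fps_const (1 / fact p))"
  define B where "B = emb fps_X"
  have x1: "XP s 1 = x s"
  proof -
    have "XP s [:1:] = x s" by (simp add: XP_const emb1)
    then show ?thesis by (simp only: one_pCons)
  qed
  have M: "ell p * x s - x s * ell p = XP s (ep p)" using MAIN[of p s 1] x1 by simp
  have Fc: "F * of_nat (Suc p) = E"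
  proof -
    have "fps_const (1 / fact (Suc p)) * of_nat (Suc p) = fps_const (1 / fact p :: complex)"
    proof -
      have nz1: "(of_nat (Suc p) :: complex) \<noteq> 0" by (simp only: of_nat_eq_0_iff)
      have nz2: "(fact p :: complex) \<noteq> 0" by (rule fact_nonzero)
      have "(1 / fact (Suc p)) * of_nat (Suc p) = (1 / (of_nat (Suc p) * fact p)) * (of_nat (Suc p) :: complex)"
        by (simp only: fact_Suc)
      also have "\<dots> = 1 / fact p" using nz1 nz2 by (simp only: divide_simps) simp
      finally have "(1 / fact (Suc p)) * of_nat (Suc p) = (1 / fact p :: complex)" .
      then show ?thesis by (simp only: fps_of_nat[symmetric] fps_const_mult)
    qed
    then show ?thesis unfolding F_def E_def by (metis emb_mult emb_of_nat)
  qed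
  have Fell: "F * ell p = B * (E * t)"
  proof -
    have "F * ell p = (F * of_nat (Suc p)) * (B * t)" by (simp add: ell_def B_def t_def mult.assoc)
    also have "\<dots> = E * (B * t)" by (simp only: Fc)
    also have "\<dots> = B * (E * t)" unfolding E_def B_def by (rule cen2)
    finally show ?thesis .
  qed
  have "B * (E * t) * x s - x s * (B * (E * t)) = F * (ell p * x s - x s * ell p)"
    unfolding Fell[symmetric] F_def by (simp add: cen2 right_diff_distrib mult.assoc)
  also have "\<dots> = F * XP s (ep p)" by (simp only: M)
  finally have L: "B * (E * t) * x s - x s * (B * (E * t)) = F * XP s (ep p)" .
  define N where "N = Suc p"
  have "F * XP s (ep p) = F * (XP s ([:dC, 1:] ^ N) - XP s ([:- dC, 1:] ^ N))"
    by (simp add: ep_def al_def be_def N_def XP_diff)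
  also have "\<dots> = (\<Sum>k\<le>N. emb (fps_const (1 / fact N) * (of_nat (N choose k) * (dC ^ (N - k) - (- dC) ^ (N - k)))) * x (s + k))"
    unfolding XP_lin_pow F_def N_def
    by (simp add: sum_subtractf[symmetric] sum_distrib_left emb_mult emb_diff right_diff_distrib left_diff_distrib mult.assoc)
  also have "\<dots> = (\<Sum>k\<le>p. emb (fps_const (1 / fact N) * (of_nat (N choose k) * (dC ^ (N - k) - (- dC) ^ (N - k)))) * x (s + k))"
    by (simp add: N_def emb0)
  also have "\<dots> = (\<Sum>k\<le>p. emb (of_int sgn * (qcoef aa (p - k + 1) - qcoef (- aa) (p - k + 1)) * fps_const (1 / fact k)) * x (s + k))"
    unfolding N_def dC_def
    by (intro sum.cong refl, subst coef_eq[OF _ sgn cdef]) auto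
  also have "\<dots> = of_int sgn * (\<Sum>k\<le>p. emb (qcoef aa (p - k + 1) - qcoef (- aa) (p - k + 1))
                                * (emb (fps_const (1 / fact k)) * x (s + k)))"
    by (simp add: sum_distrib_left emb_mult emb_of_int mult.assoc)
  finally show ?thesis using L by (simp add: B_def E_def t_def)
qed

end

lemma sbrF: "sbr False q a b = a * b - b * a" by (simp add: sbr_def)

theorem lemma4p2:
  fixes emb :: "complex fps \<Rightarrow> 'a::ring_1" and h :: "nat \<Rightarrow> nat \<Rightarrow> 'a"
    and x :: "bool \<Rightarrow> nat \<Rightarrow> nat \<Rightarrow> 'a" and m n i j s p :: nat and e :: bool
  assumes "alg_structure emb" and "yangian_rels m n emb h x"
    and "i \<in> {1..m+n+1}" and "j \<in> {1..m+n+1}"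
  shows "sbr False (ypar m j) (emb fps_X * (emb (fps_const (1 / fact p)) * tgen emb (h i) p)) (x e j s)
    = of_int (sg e) * (\<Sum>k\<le>p. emb (qcoef (cartan m n i j) (p - k + 1) - qcoef (- cartan m n i j) (p - k + 1))
                                * (emb (fps_const (1 / fact k)) * x e j (s + k)))"
proof -
  define a where "a = cartan m n i j"
  define c where "c = (of_int (sg e) * of_int a / 2 :: complex)"
  interpret A: algl emb by unfold_locales (rule assms(1))
  note R = assms(2)[unfolded yangian_rels_def Let_def]
  note RA = R[THEN conjunct1]
  note RB = R[THEN conjunct2, THEN conjunct1]
  note RD = R[THEN conjunct2, THEN conjunct2, THEN conjunct2, THEN conjunct1]
  note RE = R[THEN conjunct2, THEN conjunct2, THEN conjunct2, THEN conjunct2, THEN conjunct1]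
  have C1: "\<And>k l. h i k * h i l = h i l * h i k" using RA assms(3) by blast
  have C2: "\<And>l. h i 0 * x e j l - x e j l * h i 0 = of_int (sg e * a) * x e j l"
    using RB assms(3,4) unfolding a_def sbrF by blast
  have C2': "\<And>l. h (m+1) 0 * x e (m+1) l - x e (m+1) l * h (m+1) 0 = of_int (sg e * cartan m n (m+1) (m+1)) * x e (m+1) l"
  proof -
    have "m + 1 \<in> {1..m+n+1}" by simp
    then show "\<And>l. h (m+1) 0 * x e (m+1) l - x e (m+1) l * h (m+1) 0 = of_int (sg e * cartan m n (m+1) (m+1)) * x e (m+1) l"
      using RB unfolding sbrF by blast
  qed
  have C5: "\<And>k l. h (m+1) (k+1) * x e (m+1) l - x e (m+1) l * h (m+1) (k+1) = 0"
    using RE unfolding sbrF by blast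
  have cart0: "cartan m n (m+1) (m+1) = 0" by (simp add: cartan_def)
  have sgn: "sg e = 1 \<or> sg e = -1" by (simp add: sg_def)
  have R0: "\<And>l. h i 0 * x e j l - x e j l * h i 0 = emb (fps_const (2*c)) * x e j l"
  proof -
    fix l
    have "fps_const (2 * c) = (of_int (sg e * a) :: complex fps)"
      by (simp add: c_def fps_of_int[symmetric])
    then have "emb (fps_const (2 * c)) = of_int (sg e * a)" by (metis A.emb_of_int)
    then show "h i 0 * x e j l - x e j l * h i 0 = emb (fps_const (2*c)) * x e j l" using C2 by simp
  qed
  have cX: "emb (fps_const c * fps_X) = of_int (sg e) * emb (fps_const (of_int a / 2)) * emb fps_X"
  proof -
    have "fps_const c = of_int (sg e) * fps_const (of_int a / 2)"
      by (simp add: c_def fps_of_int[symmetric])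
    then show ?thesis by (simp add: A.emb_mult A.emb_of_int)
  qed
  have R1: "\<And>k l. h i (k+1) * x e j l - x e j l * h i (k+1) = h i k * x e j (l+1) - x e j (l+1) * h i k
              + emb (fps_const c * fps_X) * (h i k * x e j l + x e j l * h i k)"
  proof -
    fix k l
    show "h i (k+1) * x e j l - x e j l * h i (k+1) = h i k * x e j (l+1) - x e j (l+1) * h i k
              + emb (fps_const c * fps_X) * (h i k * x e j l + x e j l * h i k)"
    proof (cases "(i, j) = (m+1, m+1)")
      case False
      then have "sbr False (ypar m j) (h i (k+1)) (x e j l) = sbr False (ypar m j) (h i k) (x e j (l+1))
          + of_int (sg e) * emb (fps_const (of_int a / 2)) * emb fps_X * (h i k * x e j l + x e j l * h i k)"
        using RD assms(3,4) unfolding a_def by blast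
      then show ?thesis unfolding sbrF cX by simp
    next
      case True
      then have ij: "i = m + 1" "j = m + 1" by auto
      have c0: "c = 0" using ij cart0 by (simp add: c_def a_def)
      have l1: "h i (k+1) * x e j l - x e j l * h i (k+1) = 0" using C5 ij by simp
      have l2: "h i k * x e j (l+1) - x e j (l+1) * h i k = 0"
      proof (cases k)
        case 0 then show ?thesis using C2' ij cart0 by simp
      next
        case (Suc k') then show ?thesis using C5[of k' "l+1"] ij by simp
      qed
      show ?thesis using l1 l2 c0 by (simp add: A.emb0)
    qed
  qed
  interpret Y: ysetup emb "h i" "x e j" c
    by unfold_locales (fact assms(1) C1 R0 R1)+
  have cdef: "c = of_int (sg e) * of_int a / 2" by (simp add: c_def)
  show ?thesis unfolding sbrF a_def[symmetric]
    by (rule Y.FINAL[OF cdef sgn])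
qed


end
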